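(* Under the assumptions of Corollary 1 (namely: $m$ satisfies $D^-M(m)\le0\le D^+M(m)$; condition (B) holds with $a,b$ having finite one-sided limits at $0$; and $|D^+M(m+x)|\ge c|x|$ for all $x\in[-\delta,\delta]$ for some $c,\delta>0$), there exists a deterministic constant $K>0$ such that, with probability one, $$\sup_{k\ge n}|\hat m_k-m|\le K\,n^{-1/2}\sqrt{\log n}\quad\text{for all sufficiently large } n.$$
   Context: Let $(S,\mathcal S,Q)$ be a probability space and $h:S\times\mathbb R\to\mathbb R$ such that $h(\cdot,t)$ is $\mathcal S$-measurable for every $t\in\mathbb R$ and $h(x,\cdot)$ is convex for every $x\in S$. For $f:\mathbb R\to\mathbb R$ convex, $D^+f$ and $D^-f$ denote its right and left derivatives; $D^\pm h(x,t)$ denotes the one-sided derivatives of $h(x,\cdot)$ at $t$. Assume $\int_S|D^+h(x,t)|\,Q(dx)<\infty$ and $\int_S|D^-h(x,t)|\,Q(dx)<\infty$ for all $t\in\mathbb R$. Fix $t_0\in\mathbb R$ and set $M(t):=\int_S (h(x,t)-h(x,t_0))\,Q(dx)$; $M$ is real-valued and convex with $D^\pm M(t)=\int_S D^\pm h(x,t)\,Q(dx)$. Let $X_1,X_2,\dots$ be i.i.d. $S$-valued random variables on a probability space $(\Omega,\mathcal A,\mathbb P)$ with common law $Q$, let $M_n(t):=\frac1n\sum_{i=1}^n (h(X_i,t)-h(X_i,t_0))$, and let $\hat m_n$ be the smallest minimizing point of $M_n$ (assumed to exist; it is a random variable). Boundedness condition (B): for every $x\neq 0$ there are reals $a(x)<b(x)$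 with $a(x)\le D^+h(X_1,m+x)\le b(x)$ almost surely. *)

theory Defs
  imports "HOL-Probability.Probability"
begin

definition right_deriv :: "(real \<Rightarrow> real) \<Rightarrow> real \<Rightarrow> real" where
  "right_deriv f t = Lim (at_right t) (\<lambda>s. (f s - f t) / (s - t))"

definition left_deriv :: "(real \<Rightarrow> real) \<Rightarrow> real \<Rightarrow> real" where
  "left_deriv f t = Lim (at_left t) (\<lambda>s. (f s - f t) / (s - t))"

end

theory Submission
  imports Defs
begin


definition slope :: "(real \<Rightarrow> real) \<Rightarrow> real \<Rightarrow> real \<Rightarrow> real" where
  "slope f t s = (f s - f t) / (s - t)"

lemma slope_sym: "slope f t s = slope f s t"
  unfolding slope_def by (cases "s = t") (auto simp: field_simps)

lemma slope_alt: "slope f t s = (f t - f s) / (t - s)"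
  unfolding slope_def by (metis minus_diff_eq minus_divide_divide)

lemma slope_mono:
  assumes f: "convex_on UNIV f" and "s1 < s2" "s1 \<noteq> t" "s2 \<noteq> t"
  shows "slope f t s1 \<le> slope f t s2"
proof -
  consider "t < s1" | "s2 < t" | "s1 < t" "t < s2" using assms by linarith
  then show ?thesis
  proof cases
    case 1
    from convex_on_slope_le(1)[OF f _ _ 1 \<open>s1 < s2\<close>] show ?thesis
      unfolding slope_alt by simp
  next
    case 2
    from convex_on_slope_le(2)[OF f _ _ \<open>s1 < s2\<close> 2] show ?thesis
      unfolding slope_def by simp
  next
    case 3
    from convex_on_slope_le[OF f _ _ 3] show ?thesis
      unfolding slope_def[of f t s1] slope_alt[of f t s2] by simp
  qed
qed

lemma right_deriv_conv:
  assumes f: "convex_on UNIV f"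
  shows "((\<lambda>s. (f s - f t) / (s - t)) \<longlongrightarrow> right_deriv f t) (at_right t)"
    and "right_deriv f t = Inf (slope f t ` {t<..})"
proof -
  define L where "L = Inf (slope f t ` {t<..})"
  have bdd: "bdd_below (slope f t ` {t<..})"
    by (rule bdd_belowI[where m="slope f t (t-1)"]) (auto intro!: slope_mono[OF f])
  have Lle: "L \<le> slope f t s" if "s > t" for s
    unfolding L_def using bdd that by (auto intro!: cInf_lower)
  have lim: "(slope f t \<longlongrightarrow> L) (at_right t)"
  proof (rule order_tendstoI)
    fix a assume "a < L"
    then show "eventually (\<lambda>s. a < slope f t s) (at_right t)"
      using Lle by (intro eventually_mono[OF eventually_at_right_real[of t "t+1"]]) (auto intro: less_le_trans)
  next
    fix a assume "L < a"
    then obtain s0 where s0: "s0 > t" "slope f t s0 < a"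
      unfolding L_def using cInf_less_iff[OF _ bdd] by auto
    show "eventually (\<lambda>s. slope f t s < a) (at_right t)"
      using eventually_at_right_real[OF s0(1)]
    proof eventually_elim
      case (elim s)
      then have "slope f t s \<le> slope f t s0" by (intro slope_mono[OF f]) auto
      with s0 show ?case by simp
    qed
  qed
  then have "right_deriv f t = L"
    unfolding right_deriv_def slope_def[abs_def] by (intro tendsto_Lim) auto
  then show "right_deriv f t = Inf (slope f t ` {t<..})" by (simp add: L_def)
  from lim show "((\<lambda>s. (f s - f t) / (s - t)) \<longlongrightarrow> right_deriv f t) (at_right t)"
    using \<open>right_deriv f t = L\<close> unfolding slope_def[abs_def] by simp
qed

lemma left_deriv_conv:
  assumes f: "convex_on UNIV f"
  shows "((\<lambda>s. (f s - f t) / (s - t)) \<longlongrightarrow> left_deriv f t) (at_left t)"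
    and "left_deriv f t = Sup (slope f t ` {..<t})"
proof -
  define L where "L = Sup (slope f t ` {..<t})"
  have bdd: "bdd_above (slope f t ` {..<t})"
    by (rule bdd_aboveI[where M="slope f t (t+1)"]) (auto intro!: slope_mono[OF f])
  have Lle: "slope f t s \<le> L" if "s < t" for s
    unfolding L_def using bdd that by (auto intro!: cSup_upper)
  have lim: "(slope f t \<longlongrightarrow> L) (at_left t)"
  proof (rule order_tendstoI)
    fix a assume "a > L"
    then show "eventually (\<lambda>s. slope f t s < a) (at_left t)"
      using Lle by (intro eventually_mono[OF eventually_at_left_real[of "t-1" t]]) force+
  next
    fix a assume "a < L"
    then obtain s0 where s0: "s0 < t" "a < slope f t s0"
      unfolding L_def using less_cSup_iff[OF _ bdd] by auto
    show "eventually (\<lambda>s. a < slope f t s) (at_left t)"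
      using eventually_at_left_real[OF s0(1)]
    proof eventually_elim
      case (elim s)
      then have "slope f t s0 \<le> slope f t s" by (intro slope_mono[OF f]) auto
      with s0 show ?case by simp
    qed
  qed
  then have "left_deriv f t = L"
    unfolding left_deriv_def slope_def[abs_def] by (intro tendsto_Lim) auto
  then show "left_deriv f t = Sup (slope f t ` {..<t})" by (simp add: L_def)
  from lim show "((\<lambda>s. (f s - f t) / (s - t)) \<longlongrightarrow> left_deriv f t) (at_left t)"
    using \<open>left_deriv f t = L\<close> unfolding slope_def[abs_def] by simp
qed

lemma rd_le_slope:
  assumes f: "convex_on UNIV f" and "t < s"
  shows "right_deriv f t \<le> slope f t s"
proof -
  have bdd: "bdd_below (slope f t ` {t<..})"
    by (rule bdd_belowI[where m="slope f t (t-1)"]) (auto intro!: slope_mono[OF f])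
  show ?thesis unfolding right_deriv_conv(2)[OF f] using bdd assms(2) by (auto intro!: cInf_lower)
qed

lemma slope_le_rd:
  assumes f: "convex_on UNIV f" and "s < t"
  shows "slope f t s \<le> right_deriv f t"
  unfolding right_deriv_conv(2)[OF f] using assms
  by (intro cInf_greatest) (auto intro!: slope_mono[OF f])

lemma slope_le_ld:
  assumes f: "convex_on UNIV f" and "s < t"
  shows "slope f t s \<le> left_deriv f t"
proof -
  have bdd: "bdd_above (slope f t ` {..<t})"
    by (rule bdd_aboveI[where M="slope f t (t+1)"]) (auto intro!: slope_mono[OF f])
  show ?thesis unfolding left_deriv_conv(2)[OF f] using bdd assms(2) by (auto intro!: cSup_upper)
qed

lemma subgrad:
  assumes f: "convex_on UNIV f"
  shows "f t + right_deriv f t * (s - t) \<le> f s"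
proof -
  consider "s = t" | "t < s" | "s < t" by linarith
  then show ?thesis
  proof cases
    case 2
    with rd_le_slope[OF f 2] show ?thesis unfolding slope_def by (simp add: field_simps)
  next
    case 3
    with slope_le_rd[OF f 3] show ?thesis unfolding slope_def
      by (simp add: divide_le_eq field_simps)
  qed simp
qed

lemma rd_mono:
  assumes f: "convex_on UNIV f" and "t < u"
  shows "right_deriv f t \<le> right_deriv f u"
  using rd_le_slope[OF f assms(2)] slope_le_rd[OF f assms(2)] slope_sym[of f t u] by simp

lemma rd_le_ld:
  assumes f: "convex_on UNIV f" and "t < u"
  shows "right_deriv f t \<le> left_deriv f u"
  using rd_le_slope[OF f assms(2)] slope_le_ld[OF f assms(2)] slope_sym[of f t u] by simp



lemma event_R:
  fixes hh :: "nat \<Rightarrow> real \<Rightarrow> real" and cc :: "nat \<Rightarrow> real"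
  assumes conv: "\<And>i. i < n \<Longrightarrow> convex_on UNIV (hh i)"
    and n: "n \<ge> 1"
    and mn: "(1 / real n) * (\<Sum>i<n. hh i u - cc i) \<le> (1 / real n) * (\<Sum>i<n. hh i t - cc i)"
    and pos: "(\<Sum>i<n. right_deriv (hh i) t) > 0"
  shows "u \<le> t"
proof (rule ccontr)
  assume "\<not> u \<le> t"
  then have ut: "u - t > 0" by simp
  have "(\<Sum>i<n. right_deriv (hh i) t * (u - t)) \<le> (\<Sum>i<n. hh i u - hh i t)"
    by (intro sum_mono) (use subgrad[OF conv] in \<open>fastforce simp: algebra_simps\<close>)
  moreover have "(\<Sum>i<n. right_deriv (hh i) t * (u - t)) = (\<Sum>i<n. right_deriv (hh i) t) * (u - t)"
    by (simp add: sum_distrib_right)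
  moreover have "(\<Sum>i<n. right_deriv (hh i) t) * (u - t) > 0" using pos ut by simp
  moreover have "(\<Sum>i<n. hh i u - cc i) \<le> (\<Sum>i<n. hh i t - cc i)"
    using mn n by (simp add: divide_le_cancel)
  moreover have "(\<Sum>i<n. hh i u - cc i) - (\<Sum>i<n. hh i t - cc i) = (\<Sum>i<n. hh i u - hh i t)"
    by (simp add: sum_subtractf[symmetric])
  ultimately show False by linarith
qed

lemma event_L:
  fixes hh :: "nat \<Rightarrow> real \<Rightarrow> real" and cc :: "nat \<Rightarrow> real"
  assumes conv: "\<And>i. i < n \<Longrightarrow> convex_on UNIV (hh i)"
    and n: "n \<ge> 1"
    and mn: "\<And>s. (1 / real n) * (\<Sum>i<n. hh i u - cc i) \<le> (1 / real n) * (\<Sum>i<n. hh i s - cc i)"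
    and neg: "(\<Sum>i<n. right_deriv (hh i) t) < 0"
  shows "t < u"
proof (rule ccontr)
  assume "\<not> t < u"
  then have ut: "u - t \<le> 0" by simp
  define S where "S s = (\<Sum>i<n. hh i s - cc i)" for s
  have Sd: "S s - S t = (\<Sum>i<n. hh i s - hh i t)" for s
    unfolding S_def by (simp add: sum_subtractf[symmetric])
  have "(\<Sum>i<n. right_deriv (hh i) t * (u - t)) \<le> (\<Sum>i<n. hh i u - hh i t)"
    by (intro sum_mono) (use subgrad[OF conv] in \<open>fastforce simp: algebra_simps\<close>)
  moreover have "(\<Sum>i<n. right_deriv (hh i) t * (u - t)) = (\<Sum>i<n. right_deriv (hh i) t) * (u - t)"
    by (simp add: sum_distrib_right)
  moreover have "(\<Sum>i<n. right_deriv (hh i) t) * (u - t) \<ge> 0" using neg ut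
    by (simp add: mult_nonpos_nonpos)
  ultimately have "S t \<le> S u" using Sd[of u] by linarith
  moreover have "S u \<le> S s" for s using mn[of s] n unfolding S_def by (simp add: divide_le_cancel)
  ultimately have tmin: "S t \<le> S s" for s by (meson order_trans)
  have lim: "((\<lambda>s. \<Sum>i<n. (hh i s - hh i t) / (s - t)) \<longlongrightarrow> (\<Sum>i<n. right_deriv (hh i) t)) (at_right t)"
    by (intro tendsto_sum right_deriv_conv(1)[OF conv]) simp
  have "eventually (\<lambda>s. (\<Sum>i<n. (hh i s - hh i t) / (s - t)) < 0 \<and> t < s) (at_right t)"
    using order_tendstoD(2)[OF lim neg] eventually_at_right_less[of t] by eventually_elim auto
  then obtain s where s: "(\<Sum>i<n. (hh i s - hh i t) / (s - t)) < 0" "t < s"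
    using eventually_happens[of _ "at_right t"] by auto
  have "(\<Sum>i<n. (hh i s - hh i t) / (s - t)) = (S s - S t) / (s - t)"
    by (simp add: Sd sum_divide_distrib)
  with s have "S s - S t < 0" by (simp add: divide_less_0_iff)
  with tmin[of s] show False by simp
qed

lemma hoeff_wrap:
  fixes P :: "'w measure" and Y :: "nat \<Rightarrow> 'w \<Rightarrow> real" and a b :: real and n :: nat
  assumes P: "prob_space P" and ind: "prob_space.indep_vars P (\<lambda>_. borel) Y {..<n}"
    and dst: "\<And>i. i < n \<Longrightarrow> distr P borel (Y i) = distr P borel (Y 0)"
    and rv: "Y 0 \<in> borel_measurable P" and bd: "AE \<omega> in P. Y 0 \<omega> \<in> {a..b}"
    and ab: "a < b" and n: "n > 0"
  shows "integral\<^sup>L P (Y 0) \<ge> 0 \<Longrightarrow> measure P {\<omega>\<in>space P. (\<Sum>i<n. Y i \<omega>) / real n \<le> 0}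
            \<le> exp (-2 * real n * (integral\<^sup>L P (Y 0))\<^sup>2 / (b - a)\<^sup>2)"
    and "integral\<^sup>L P (Y 0) \<le> 0 \<Longrightarrow> measure P {\<omega>\<in>space P. (\<Sum>i<n. Y i \<omega>) / real n \<ge> 0}
            \<le> exp (-2 * real n * (integral\<^sup>L P (Y 0))\<^sup>2 / (b - a)\<^sup>2)"
proof -
  have H: "Hoeffding_ineq_iid P {..<n} Y (Y 0) a b"
    unfolding Hoeffding_ineq_iid_def iid_interval_bounded_random_variables_def
      iid_interval_bounded_random_variables_axioms_def
    apply (intro conjI allI impI)
         apply (rule P)
        apply simp
       apply (rule ind)
      apply (rule dst, simp)
     apply (rule rv)
    apply (rule bd)
    done
  have ne: "{..<n} \<noteq> {}" using n by auto
  show "integral\<^sup>L P (Y 0) \<ge> 0 \<Longrightarrow> measure P {\<omega>\<in>space P. (\<Sum>i<n. Y i \<omega>) / real n \<le> 0}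
            \<le> exp (-2 * real n * (integral\<^sup>L P (Y 0))\<^sup>2 / (b - a)\<^sup>2)"
  proof -
    assume mu: "integral\<^sup>L P (Y 0) \<ge> 0"
    from Hoeffding_ineq_iid.Hoeffding_ineq_le'[OF H mu ab ne] show ?thesis by simp
  qed
  show "integral\<^sup>L P (Y 0) \<le> 0 \<Longrightarrow> measure P {\<omega>\<in>space P. (\<Sum>i<n. Y i \<omega>) / real n \<ge> 0}
            \<le> exp (-2 * real n * (integral\<^sup>L P (Y 0))\<^sup>2 / (b - a)\<^sup>2)"
  proof -
    assume mu: "integral\<^sup>L P (Y 0) \<le> 0"
    then have mu': "- integral\<^sup>L P (Y 0) \<ge> 0" by simp
    from Hoeffding_ineq_iid.Hoeffding_ineq_ge'[OF H mu' ab ne] show ?thesis by simp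
  qed
qed

lemma expln: assumes "n \<ge> 1" shows "exp (-2 * ln (real n)) = 1 / real n ^ 2"
proof -
  have "exp (2 * ln (real n)) = real n ^ 2" using exp_of_nat_mult[of 2 "ln (real n)"] assms by simp
  then show ?thesis by (simp add: exp_minus divide_inverse)
qed
lemma exp_bound:
  fixes B c K mu D e L n :: real
  assumes "c > 0" "B > 0" "K = B / c" "e^2 = K^2 * (L / n)" "(c * e)^2 \<le> mu^2" "0 < D" "D \<le> B" "n > 0" "L \<ge> 0"
  shows "exp (-2 * n * mu^2 / D^2) \<le> exp (-2 * L)"
proof -
  have h2: "(c * e)^2 = B^2 * (L / n)" using assms by (simp add: power_mult_distrib power_divide)
  have h4: "D^2 \<le> B^2" using assms by (intro power_mono) auto
  have "L = n * (B^2 * (L / n)) / B^2" using assms by (simp add: field_simps)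
  also have "\<dots> \<le> n * mu^2 / B^2" using assms h2 by (intro divide_right_mono mult_left_mono) auto
  also have "\<dots> \<le> n * mu^2 / D^2" using assms h4 by (intro divide_left_mono mult_nonneg_nonneg mult_pos_pos) auto
  finally have "L \<le> n * mu^2 / D^2" .
  then show ?thesis by simp
qed



lemma lin1: fixes p q r s :: real shows "s - q + 2 \<le> 2 * (\<bar>p\<bar> + \<bar>q\<bar> + \<bar>r\<bar> + \<bar>s\<bar> + 1)"
proof -
  have "s \<le> \<bar>s\<bar>" "- q \<le> \<bar>q\<bar>" by auto
  moreover have "0 \<le> \<bar>q\<bar>" "0 \<le> \<bar>s\<bar>" "0 \<le> \<bar>r\<bar>" "0 \<le> \<bar>p\<bar>" by auto
  ultimately show ?thesis by (smt (verit))
qed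

lemma lin2: fixes p q r s :: real shows "r - p + 2 \<le> 2 * (\<bar>p\<bar> + \<bar>q\<bar> + \<bar>r\<bar> + \<bar>s\<bar> + 1)"
proof -
  have "r \<le> \<bar>r\<bar>" "- p \<le> \<bar>p\<bar>" by auto
  moreover have "0 \<le> \<bar>q\<bar>" "0 \<le> \<bar>s\<bar>" "0 \<le> \<bar>r\<bar>" "0 \<le> \<bar>p\<bar>" by auto
  ultimately show ?thesis by (smt (verit))
qed

lemma abs_bnd1:
  fixes d y1 y2 A B :: real
  assumes "y1 \<le> d" "d \<le> y2" "y2 \<le> B \<and> - y1 \<le> A \<and> 0 \<le> A \<and> 0 \<le> B"
  shows "\<bar>d\<bar> \<le> \<bar>A + B\<bar>"
proof -
  have "\<bar>A + B\<bar> = A + B" using assms by simp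
  moreover have "\<bar>d\<bar> \<le> A + B" using assms by (auto simp: abs_le_iff)
  ultimately show ?thesis by simp
qed

lemma abs_bnd2:
  fixes v lo hi :: real
  assumes "lo \<le> v" "v \<le> hi"
  shows "\<bar>v\<bar> \<le> \<bar>lo\<bar> + \<bar>hi\<bar>"
  using assms by (auto simp: abs_le_iff abs_if)

theorem corollary2:
  fixes Q :: "'s measure" and P :: "'w measure"
    and h :: "'s \<Rightarrow> real \<Rightarrow> real"
    and t0 m :: real
    and X :: "nat \<Rightarrow> 'w \<Rightarrow> 's"
    and mhat :: "nat \<Rightarrow> 'w \<Rightarrow> real"
    and a b :: "real \<Rightarrow> real"
    and c \<delta> :: real
  defines "M \<equiv> (\<lambda>t. \<integral>x. (h x t - h x t0) \<partial>Q)"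
  defines "Mn \<equiv> (\<lambda>n \<omega> t. (1 / real n) * (\<Sum>i<n. h (X i \<omega>) t - h (X i \<omega>) t0))"
  assumes Q_prob: "prob_space Q"
    and h_meas: "\<And>t. (\<lambda>x. h x t) \<in> borel_measurable Q"
    and h_convex: "\<And>x. x \<in> space Q \<Longrightarrow> convex_on UNIV (h x)"
    and int_right: "\<And>t. integrable Q (\<lambda>x. right_deriv (h x) t)"
    and int_left: "\<And>t. integrable Q (\<lambda>x. left_deriv (h x) t)"
    and P_prob: "prob_space P"
    and X_meas: "\<And>i. X i \<in> measurable P Q"
    and X_indep: "prob_space.indep_vars P (\<lambda>_. Q) X UNIV"
    and X_law: "\<And>i. distr P Q (X i) = Q"
    and mhat_min: "\<And>n \<omega> t. n \<ge> 1 \<Longrightarrow> \<omega> \<in> space P \<Longrightarrow> Mn n \<omega> (mhat n \<omega>) \<le> Mn n \<omega> t"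
    and mhat_smallest: "\<And>n \<omega> t. n \<ge> 1 \<Longrightarrow> \<omega> \<in> space P \<Longrightarrow>
                          (\<forall>s. Mn n \<omega> t \<le> Mn n \<omega> s) \<Longrightarrow> mhat n \<omega> \<le> t"
    and mhat_meas: "\<And>n. n \<ge> 1 \<Longrightarrow> mhat n \<in> borel_measurable P"
    and m_crit: "left_deriv M m \<le> 0" "0 \<le> right_deriv M m"
    and condB: "\<And>x. x \<noteq> 0 \<Longrightarrow> a x < b x \<and>
                   (AE \<omega> in P. a x \<le> right_deriv (h (X 0 \<omega>)) (m + x)
                               \<and> right_deriv (h (X 0 \<omega>)) (m + x) \<le> b x)"
    and a_lim: "\<exists>l. (a \<longlongrightarrow> l) (at_left 0)" "\<exists>l. (a \<longlongrightarrow> l) (at_right 0)"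
    and b_lim: "\<exists>l. (b \<longlongrightarrow> l) (at_left 0)" "\<exists>l. (b \<longlongrightarrow> l) (at_right 0)"
    and c_pos: "c > 0" and \<delta>_pos: "\<delta> > 0"
    and growth: "\<And>x. x \<in> {-\<delta>..\<delta>} \<Longrightarrow> \<bar>right_deriv M (m + x)\<bar> \<ge> c * \<bar>x\<bar>"
  shows "\<exists>K>0. AE \<omega> in P. eventually
           (\<lambda>n. \<forall>k\<ge>n. \<bar>mhat k \<omega> - m\<bar> \<le> K * sqrt (ln (real n)) / sqrt (real n)) sequentially"
proof -
  interpret Qp: prob_space Q by (rule Q_prob)
  interpret Pp: prob_space P by (rule P_prob)
  note [measurable] = X_meas h_meas
  define g where "g t x = right_deriv (h x) t" for t x
  have g_meas[measurable]: "g t \<in> borel_measurable Q" for t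
    using int_right[of t] unfolding g_def[abs_def] by auto
  have sub: "h x t + g t x * (s - t) \<le> h x s" if "x \<in> space Q" for x s t
    unfolding g_def by (rule subgrad[OF h_convex[OF that]])
  have intH: "integrable Q (\<lambda>x. h x s - h x t)" for s t
  proof (rule Bochner_Integration.integrable_bound[where f="\<lambda>x. \<bar>g t x\<bar> * \<bar>s-t\<bar> + \<bar>g s x\<bar> * \<bar>s - t\<bar>"])
    show "integrable Q (\<lambda>x. \<bar>g t x\<bar> * \<bar>s-t\<bar> + \<bar>g s x\<bar> * \<bar>s - t\<bar>)"
      using int_right unfolding g_def by auto
    show "(\<lambda>x. h x s - h x t) \<in> borel_measurable Q" by measurable
    show "AE x in Q. norm (h x s - h x t) \<le> norm (\<bar>g t x\<bar> * \<bar>s-t\<bar> + \<bar>g s x\<bar> * \<bar>s - t\<bar>)"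
    proof (rule AE_I2)
      fix x assume x: "x \<in> space Q"
      have 1: "g t x * (s - t) \<le> h x s - h x t" using sub[OF x, of t s] by simp
      have 2: "h x s - h x t \<le> g s x * (s - t)" using sub[OF x, of s t] by (simp add: algebra_simps)
      have 3: "\<bar>g t x * (s-t)\<bar> = \<bar>g t x\<bar> * \<bar>s - t\<bar>" "\<bar>g s x * (s-t)\<bar> = \<bar>g s x\<bar> * \<bar>s-t\<bar>"
        by (simp_all add: abs_mult)
      have 4: "0 \<le> \<bar>g t x\<bar> * \<bar>s - t\<bar>" "0 \<le> \<bar>g s x\<bar> * \<bar>s-t\<bar>" by simp_all
      show "norm (h x s - h x t) \<le> norm (\<bar>g t x\<bar> * \<bar>s-t\<bar> + \<bar>g s x\<bar> * \<bar>s - t\<bar>)"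
        unfolding real_norm_def
        by (rule abs_bnd1[OF 1 2]) (use 3 4 abs_ge_self[of "g s x * (s-t)"] abs_ge_minus_self[of "g t x * (s-t)"] in auto)
    qed
  qed
  have M_eq: "M s - M t = (\<integral>x. h x s - h x t \<partial>Q)" for s t
  proof -
    have "M s - M t = (\<integral>x. (h x s - h x t0) - (h x t - h x t0) \<partial>Q)"
      unfolding M_def by (rule Bochner_Integration.integral_diff[symmetric, OF intH intH])
    then show ?thesis by simp
  qed
  have Mconv: "convex_on UNIV M"
    unfolding convex_on_alt
  proof (intro conjI ballI allI impI)
    fix x y u :: real assume u: "0 \<le> u \<and> u \<le> 1"
    have "M (u *\<^sub>R x + (1 - u) *\<^sub>R y) \<le> (\<integral>z. u * (h z x - h z t0) + (1 - u) * (h z y - h z t0) \<partial>Q)"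
      unfolding M_def
    proof (rule integral_mono)
      show "integrable Q (\<lambda>z. h z (u *\<^sub>R x + (1 - u) *\<^sub>R y) - h z t0)" by (rule intH)
      show "integrable Q (\<lambda>z. u * (h z x - h z t0) + (1 - u) * (h z y - h z t0))"
        using intH by auto
      fix z assume z: "z \<in> space Q"
      have "h z (u *\<^sub>R x + (1 - u) *\<^sub>R y) \<le> u * h z x + (1 - u) * h z y"
        using h_convex[OF z] u unfolding convex_on_alt by blast
      then show "h z (u *\<^sub>R x + (1 - u) *\<^sub>R y) - h z t0 \<le> u * (h z x - h z t0) + (1 - u) * (h z y - h z t0)"
        by (simp add: algebra_simps)
    qed
    also have "\<dots> = u * M x + (1 - u) * M y"
      unfolding M_def using intH by (simp add: integral_add)
    finally show "M (u *\<^sub>R x + (1 - u) *\<^sub>R y) \<le> u * M x + (1 - u) * M y" .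
  qed simp
  have slopeM: "slope M t s = (\<integral>x. slope (h x) t s \<partial>Q)" for s t
    unfolding slope_def using M_eq by simp
  have rdM: "right_deriv M t = (\<integral>x. g t x \<partial>Q)" for t
  proof -
    define sk where "sk k = t + inverse (real (Suc k))" for k
    have sk_lim: "filterlim sk (at_right t) sequentially"
    proof (rule tendsto_imp_filterlim_at_right)
      show "(sk \<longlongrightarrow> t) sequentially"
        unfolding sk_def using tendsto_add[OF tendsto_const LIMSEQ_inverse_real_of_nat, of t] by simp
    qed (simp add: sk_def)
    have 1: "(\<lambda>k. slope M t (sk k)) \<longlonglongrightarrow> right_deriv M t"
      using filterlim_compose[OF right_deriv_conv(1)[OF Mconv, of t] sk_lim] unfolding slope_def by simp
    have 2: "(\<lambda>k. \<integral>x. slope (h x) t (sk k) \<partial>Q) \<longlonglongrightarrow> (\<integral>x. g t x \<partial>Q)"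
    proof (rule integral_dominated_convergence[where w="\<lambda>x. \<bar>g t x\<bar> + \<bar>slope (h x) t (t+1)\<bar>"])
      show "g t \<in> borel_measurable Q" by measurable
      show "(\<lambda>x. slope (h x) t (sk k)) \<in> borel_measurable Q" for k unfolding slope_def by measurable
      show "integrable Q (\<lambda>x. \<bar>g t x\<bar> + \<bar>slope (h x) t (t+1)\<bar>)"
        unfolding slope_def using int_right intH by (auto simp: g_def)
      show "AE x in Q. (\<lambda>k. slope (h x) t (sk k)) \<longlonglongrightarrow> g t x"
      proof (rule AE_I2)
        fix x assume x: "x \<in> space Q"
        show "(\<lambda>k. slope (h x) t (sk k)) \<longlonglongrightarrow> g t x"
          using filterlim_compose[OF right_deriv_conv(1)[OF h_convex[OF x], of t] sk_lim]
          unfolding slope_def g_def by simp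
      qed
      show "AE x in Q. norm (slope (h x) t (sk k)) \<le> \<bar>g t x\<bar> + \<bar>slope (h x) t (t+1)\<bar>" for k
      proof (rule AE_I2)
        fix x assume x: "x \<in> space Q"
        have tk: "t < sk k" unfolding sk_def by simp
        have lo: "g t x \<le> slope (h x) t (sk k)" unfolding g_def by (rule rd_le_slope[OF h_convex[OF x] tk])
        have "sk k \<le> t + 1" unfolding sk_def by (simp add: inverse_le_1_iff)
        then have hi: "slope (h x) t (sk k) \<le> slope (h x) t (t+1)"
          using slope_mono[OF h_convex[OF x], of "sk k" "t+1" t] tk
          by (cases "sk k = t + 1") auto
        show "norm (slope (h x) t (sk k)) \<le> \<bar>g t x\<bar> + \<bar>slope (h x) t (t+1)\<bar>"
          unfolding real_norm_def by (rule abs_bnd2[OF lo hi])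
      qed
    qed
    from 1 2 show ?thesis unfolding slopeM by (rule LIMSEQ_unique)
  qed
  have mu_pos: "c * x \<le> (\<integral>z. g (m+x) z \<partial>Q)" if "0 < x" "x \<le> \<delta>" for x
  proof -
    have "right_deriv M m \<le> right_deriv M (m + x)" using rd_mono[OF Mconv, of m "m+x"] that by simp
    moreover have "c * \<bar>x\<bar> \<le> \<bar>right_deriv M (m + x)\<bar>" using growth[of x] that \<delta>_pos by simp
    ultimately show ?thesis using m_crit(2) that unfolding rdM by simp
  qed
  have mu_neg: "(\<integral>z. g (m+x) z \<partial>Q) \<le> c * x" if "x < 0" "-\<delta> \<le> x" for x
  proof -
    have "right_deriv M (m + x) \<le> left_deriv M m" using rd_le_ld[OF Mconv, of "m+x" m] that by simp
    moreover have "c * \<bar>x\<bar> \<le> \<bar>right_deriv M (m + x)\<bar>" using growth[of x] that \<delta>_pos by simp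
    ultimately show ?thesis using m_crit(1) that unfolding rdM by simp
  qed
  obtain la1 where la1: "(a \<longlongrightarrow> la1) (at_left 0)" using a_lim(1) by blast
  obtain la2 where la2: "(a \<longlongrightarrow> la2) (at_right 0)" using a_lim(2) by blast
  obtain lb1 where lb1: "(b \<longlongrightarrow> lb1) (at_left 0)" using b_lim(1) by blast
  obtain lb2 where lb2: "(b \<longlongrightarrow> lb2) (at_right 0)" using b_lim(2) by blast
  have "eventually (\<lambda>x. dist (a x) la2 < 1 \<and> dist (b x) lb2 < 1) (at_right (0::real))"
    using tendstoD[OF la2 zero_less_one] tendstoD[OF lb2 zero_less_one] by eventually_elim simp
  then obtain e1 where e1: "e1 > 0" "\<And>y. 0 < y \<Longrightarrow> y < e1 \<Longrightarrow> dist (a y) la2 < 1 \<and> dist (b y) lb2 < 1"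
    unfolding eventually_at_right[of 0 "1::real", OF zero_less_one] by blast
  have "eventually (\<lambda>x. dist (a x) la1 < 1 \<and> dist (b x) lb1 < 1) (at_left (0::real))"
    using tendstoD[OF la1 zero_less_one] tendstoD[OF lb1 zero_less_one] by eventually_elim simp
  then have "\<exists>e<0. \<forall>y>e. y < 0 \<longrightarrow> dist (a y) la1 < 1 \<and> dist (b y) lb1 < 1"
    using eventually_at_left[of "-1::real" 0] by simp
  then obtain e2 where e2: "e2 < 0" "\<And>y. e2 < y \<Longrightarrow> y < 0 \<Longrightarrow> dist (a y) la1 < 1 \<and> dist (b y) lb1 < 1"
    by blast
  define \<eta> where "\<eta> = min e1 (- e2)"
  have \<eta>_pos: "\<eta> > 0" using e1 e2 by (simp add: \<eta>_def)
  define B where "B = 2 * (\<bar>la1\<bar> + \<bar>la2\<bar> + \<bar>lb1\<bar> + \<bar>lb2\<bar> + 1)"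
  have B_pos: "B > 0" unfolding B_def by (simp add: add_nonneg_pos)
  have Bge1: "lb2 - la2 + 2 \<le> B" unfolding B_def by (rule lin1)
  have Bge2: "lb1 - la1 + 2 \<le> B" unfolding B_def by (rule lin2)
  note Bge = Bge1 Bge2
  have abB: "b x - a x \<le> B" if "x \<noteq> 0" "\<bar>x\<bar> < \<eta>" for x
  proof (cases "x > 0")
    case True
    then have "dist (a x) la2 < 1 \<and> dist (b x) lb2 < 1" using e1(2)[of x] that by (simp add: \<eta>_def)
    then have "la2 - 1 < a x" "b x < lb2 + 1" by (auto simp: dist_real_def abs_less_iff)
    then show ?thesis using Bge(1) by linarith
  next
    case False
    then have "x < 0" using that by simp
    then have "dist (a x) la1 < 1 \<and> dist (b x) lb1 < 1" using e2(2)[of x] that by (simp add: \<eta>_def)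
    then have "la1 - 1 < a x" "b x < lb1 + 1" by (auto simp: dist_real_def abs_less_iff)
    then show ?thesis using Bge(2) by linarith
  qed
  define K where "K = B / c"
  have K_pos: "K > 0" using B_pos c_pos by (simp add: K_def)
  define \<epsilon> where "\<epsilon> n = K * sqrt (ln (real n)) / sqrt (real n)" for n :: nat
  have eps_alt: "\<epsilon> = (\<lambda>n. K * sqrt (ln (real n) / real n))"
    by (rule ext) (simp add: \<epsilon>_def real_sqrt_divide)
  have eps_lim: "\<epsilon> \<longlonglongrightarrow> 0"
  proof -
    have "(\<lambda>n. ln (real n) / real n) \<longlonglongrightarrow> 0"
      using filterlim_compose[OF ln_x_over_x_tendsto_0 filterlim_real_sequentially] .
    then have "(\<lambda>n. K * sqrt (ln (real n) / real n)) \<longlonglongrightarrow> K * sqrt 0"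
      by (intro tendsto_intros)
    then show ?thesis by (simp add: eps_alt)
  qed
  have eps_pos: "0 < \<epsilon> n" if "n \<ge> 2" for n
  proof -
    have "ln (real n) > 0" using that by (intro ln_gt_zero) simp
    then show ?thesis using that K_pos by (simp add: eps_alt)
  qed
  have eps_sq: "(\<epsilon> n)^2 = K^2 * (ln (real n) / real n)" if "n \<ge> 1" for n
  proof -
    have "ln (real n) \<ge> 0" using that by simp
    then show ?thesis using that by (simp add: eps_alt power_mult_distrib)
  qed
  have eps_anti: "\<epsilon> k \<le> \<epsilon> n" if "3 \<le> n" "n \<le> k" for n k
  proof -
    have "exp 1 \<le> real n" using exp_le that by linarith
    then have "ln (real k) / real k \<le> ln (real n) / real n"
      using that by (intro ln_x_over_x_mono) auto
    then show ?thesis using K_pos by (simp add: eps_alt real_sqrt_le_mono)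
  qed
  have "min \<eta> \<delta> > 0" using \<eta>_pos \<delta>_pos by simp
  from order_tendstoD(2)[OF eps_lim this] obtain N where N: "\<And>n. n \<ge> N \<Longrightarrow> \<epsilon> n < min \<eta> \<delta>"
    unfolding eventually_sequentially by blast
  define N0 where "N0 = max N 3"
  have N0: "N0 \<ge> 3" "\<And>n. n \<ge> N0 \<Longrightarrow> \<epsilon> n < \<eta> \<and> \<epsilon> n < \<delta>"
    using N by (auto simp: N0_def)
  have indY: "Pp.indep_vars (\<lambda>_. borel) (\<lambda>i \<omega>. g t (X i \<omega>)) {..<n}" for t n
    using Pp.indep_vars_subset[OF Pp.indep_vars_compose2[OF X_indep, where Y="\<lambda>_. g t" and N="\<lambda>_. borel"]]
    by auto
  have dstQ: "distr P borel (\<lambda>\<omega>. g t (X i \<omega>)) = distr Q borel (g t)" for t i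
  proof -
    have "distr P borel (\<lambda>\<omega>. g t (X i \<omega>)) = distr (distr P Q (X i)) borel (g t)"
      by (simp add: distr_distr[OF g_meas X_meas] comp_def)
    then show ?thesis by (simp add: X_law)
  qed
  have EY: "integral\<^sup>L P (\<lambda>\<omega>. g t (X 0 \<omega>)) = (\<integral>z. g t z \<partial>Q)" for t
    using integral_distr[OF X_meas[of 0] g_meas[of t]] X_law[of 0] by simp
  have bdY: "AE \<omega> in P. g (m+x) (X 0 \<omega>) \<in> {a x..b x}" if "x \<noteq> 0" for x
    using condB[OF that] by (simp add: g_def)
  have rvY: "(\<lambda>\<omega>. g t (X i \<omega>)) \<in> borel_measurable P" for t i by measurable
  have Xsp: "X i \<omega> \<in> space Q" if "\<omega> \<in> space P" for i \<omega>
    using measurable_space[OF X_meas that] .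
  have expb: "exp (-2 * real n * (\<integral>z. g (m+x) z \<partial>Q)^2 / (b x - a x)^2) \<le> 1 / real n ^ 2"
    if n: "n \<ge> N0" and x: "x = \<epsilon> n \<or> x = - \<epsilon> n" and mu: "c * \<epsilon> n \<le> \<bar>\<integral>z. g (m+x) z \<partial>Q\<bar>" for n x
  proof -
    have n1: "n \<ge> 1" "real n > 0" using n N0 by auto
    have ep: "0 < \<epsilon> n" using eps_pos[of n] n N0 by simp
    have x0: "x \<noteq> 0" "\<bar>x\<bar> < \<eta>" using x ep N0(2)[OF n] by auto
    have D: "0 < b x - a x" "b x - a x \<le> B" using condB[OF x0(1)] abB[OF x0] by auto
    have "(c * \<epsilon> n)^2 \<le> (\<integral>z. g (m+x) z \<partial>Q)^2"
      using mu c_pos ep power_mono[OF mu, of 2] by simp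
    then have "exp (-2 * real n * (\<integral>z. g (m+x) z \<partial>Q)^2 / (b x - a x)^2) \<le> exp (-2 * ln (real n))"
      using exp_bound[OF c_pos B_pos K_def eps_sq[OF n1(1)] _ D n1(2)] n1 by simp
    also have "\<dots> = 1 / real n ^ 2" using expln[OF n1(1)] .
    finally show ?thesis .
  qed
  have PR: "measure P {\<omega>\<in>space P. m + \<epsilon> n < mhat n \<omega>} \<le> 1 / real n ^ 2" if n: "n \<ge> N0" for n
  proof -
    define x where "x = \<epsilon> n"
    have ep: "0 < \<epsilon> n" using eps_pos[of n] n N0 by simp
    have x: "0 < x" "x \<le> \<delta>" "x \<noteq> 0" using ep N0(2)[OF n] by (auto simp: x_def)
    have n1: "n \<ge> 1" "n > 0" using n N0 by auto
    have mupos: "c * x \<le> (\<integral>z. g (m+x) z \<partial>Q)" using mu_pos[OF x(1,2)] .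
    have mu0: "0 \<le> (\<integral>z. g (m+x) z \<partial>Q)" using mupos mult_pos_pos[OF c_pos x(1)] by linarith
    have "{\<omega>\<in>space P. m + \<epsilon> n < mhat n \<omega>} \<subseteq> {\<omega>\<in>space P. (\<Sum>i<n. g (m+x) (X i \<omega>)) / real n \<le> 0}"
    proof safe
      fix \<omega> assume \<omega>: "\<omega> \<in> space P" "m + \<epsilon> n < mhat n \<omega>"
      show "(\<Sum>i<n. g (m+x) (X i \<omega>)) / real n \<le> 0"
      proof (rule ccontr)
        assume "\<not> ?thesis"
        then have "(\<Sum>i<n. right_deriv (h (X i \<omega>)) (m+x)) > 0" using n1
          by (simp add: g_def divide_less_0_iff not_le zero_less_divide_iff)
        from event_R[where hh="\<lambda>i. h (X i \<omega>)" and cc="\<lambda>i. h (X i \<omega>) t0", OF h_convex[OF Xsp[OF \<omega>(1)]] n1(1)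
            mhat_min[OF n1(1) \<omega>(1), of "m+x", unfolded Mn_def] this]
        show False using \<omega>(2) by (simp add: x_def)
      qed
    qed
    then have "measure P {\<omega>\<in>space P. m + \<epsilon> n < mhat n \<omega>} \<le> measure P {\<omega>\<in>space P. (\<Sum>i<n. g (m+x) (X i \<omega>)) / real n \<le> 0}"
      by (intro Pp.finite_measure_mono) measurable
    also have "\<dots> \<le> exp (-2 * real n * (\<integral>z. g (m+x) z \<partial>Q)^2 / (b x - a x)^2)"
      using hoeff_wrap(1)[where Y="\<lambda>i \<omega>. g (m+x) (X i \<omega>)", OF P_prob indY _ rvY bdY[OF x(3)] _ n1(2)]
        condB[OF x(3)] dstQ EY mu0 by simp
    also have "\<dots> \<le> 1 / real n ^ 2"
      using expb[OF n, of x] mupos x by (simp add: x_def)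
    finally show ?thesis .
  qed
  have PL: "measure P {\<omega>\<in>space P. mhat n \<omega> < m - \<epsilon> n} \<le> 1 / real n ^ 2" if n: "n \<ge> N0" for n
  proof -
    define x where "x = - \<epsilon> n"
    have ep: "0 < \<epsilon> n" using eps_pos[of n] n N0 by simp
    have x: "x < 0" "-\<delta> \<le> x" "x \<noteq> 0" using ep N0(2)[OF n] by (auto simp: x_def)
    have n1: "n \<ge> 1" "n > 0" using n N0 by auto
    have muneg: "(\<integral>z. g (m+x) z \<partial>Q) \<le> c * x" using mu_neg[OF x(1,2)] .
    have mu0: "(\<integral>z. g (m+x) z \<partial>Q) \<le> 0" using muneg mult_pos_neg[OF c_pos x(1)] by linarith
    have "{\<omega>\<in>space P. mhat n \<omega> < m - \<epsilon> n} \<subseteq> {\<omega>\<in>space P. (\<Sum>i<n. g (m+x) (X i \<omega>)) / real n \<ge> 0}"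
    proof safe
      fix \<omega> assume \<omega>: "\<omega> \<in> space P" "mhat n \<omega> < m - \<epsilon> n"
      show "(\<Sum>i<n. g (m+x) (X i \<omega>)) / real n \<ge> 0"
      proof (rule ccontr)
        assume "\<not> ?thesis"
        then have "(\<Sum>i<n. right_deriv (h (X i \<omega>)) (m+x)) < 0" using n1
          by (simp add: g_def divide_less_0_iff not_le)
        from event_L[where hh="\<lambda>i. h (X i \<omega>)" and cc="\<lambda>i. h (X i \<omega>) t0", OF h_convex[OF Xsp[OF \<omega>(1)]] n1(1)
            mhat_min[OF n1(1) \<omega>(1), unfolded Mn_def] this]
        show False using \<omega>(2) by (simp add: x_def)
      qed
    qed
    then have "measure P {\<omega>\<in>space P. mhat n \<omega> < m - \<epsilon> n} \<le> measure P {\<omega>\<in>space P. (\<Sum>i<n. g (m+x) (X i \<omega>)) / real n \<ge> 0}"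
      by (intro Pp.finite_measure_mono) measurable
    also have "\<dots> \<le> exp (-2 * real n * (\<integral>z. g (m+x) z \<partial>Q)^2 / (b x - a x)^2)"
      using hoeff_wrap(2)[where Y="\<lambda>i \<omega>. g (m+x) (X i \<omega>)", OF P_prob indY _ rvY bdY[OF x(3)] _ n1(2)]
        condB[OF x(3)] dstQ EY mu0 by simp
    also have "\<dots> \<le> 1 / real n ^ 2"
      using expb[OF n, of x] muneg x by (simp add: x_def)
    finally show ?thesis .
  qed
  define A where "A n = (if N0 \<le> n then {\<omega>\<in>space P. m + \<epsilon> n < mhat n \<omega>} \<union> {\<omega>\<in>space P. mhat n \<omega> < m - \<epsilon> n} else {})" for n
  have A_sets: "A n \<in> sets P" for n
  proof (cases "N0 \<le> n")
    case True
    then have [measurable]: "mhat n \<in> borel_measurable P" using mhat_meas[of n] N0 by simp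
    show ?thesis using True unfolding A_def by simp measurable
  qed (simp add: A_def)
  have A_bnd: "measure P (A n) \<le> 2 * inverse (real n ^ 2)" for n
  proof (cases "N0 \<le> n")
    case True
    then have [measurable]: "mhat n \<in> borel_measurable P" using mhat_meas[of n] N0 by simp
    have "measure P (A n) \<le> measure P {\<omega>\<in>space P. m + \<epsilon> n < mhat n \<omega>} + measure P {\<omega>\<in>space P. mhat n \<omega> < m - \<epsilon> n}"
      using True unfolding A_def by (simp, intro measure_Un_le) measurable
    also have "\<dots> \<le> 1 / real n ^ 2 + 1 / real n ^ 2" using PR[OF True] PL[OF True] by simp
    finally show ?thesis by (simp add: divide_inverse)
  qed (simp add: A_def)
  have A_sum: "summable (\<lambda>n. measure P (A n))"
  proof (rule summable_comparison_test)
    show "\<exists>N. \<forall>n\<ge>N. norm (measure P (A n)) \<le> 2 * inverse (real n ^ 2)" using A_bnd by auto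
    show "summable (\<lambda>n. 2 * inverse (real n ^ 2))"
      by (intro summable_mult inverse_power_summable) simp
  qed
  have BC: "AE \<omega> in P. eventually (\<lambda>n. \<omega> \<in> space P - A n) sequentially"
    by (rule borel_cantelli_AE1[OF A_sets _ A_sum]) (simp add: Pp.emeasure_finite less_top[symmetric])
  show ?thesis
  proof (intro exI conjI)
    show "K > 0" by (rule K_pos)
    show "AE \<omega> in P. eventually
           (\<lambda>n. \<forall>k\<ge>n. \<bar>mhat k \<omega> - m\<bar> \<le> K * sqrt (ln (real n)) / sqrt (real n)) sequentially"
      using BC
    proof (rule eventually_mono)
      fix \<omega> assume "eventually (\<lambda>n. \<omega> \<in> space P - A n) sequentially"
      then obtain N1 where N1: "\<And>n. n \<ge> N1 \<Longrightarrow> \<omega> \<in> space P - A n"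
        unfolding eventually_sequentially by blast
      show "eventually (\<lambda>n. \<forall>k\<ge>n. \<bar>mhat k \<omega> - m\<bar> \<le> K * sqrt (ln (real n)) / sqrt (real n)) sequentially"
        unfolding eventually_sequentially
      proof (intro exI allI impI)
        fix n k assume nk: "max N0 N1 \<le> n" "n \<le> k"
        then have k: "N0 \<le> k" "N1 \<le> k" by auto
        from N1[OF k(2)] k(1) have "\<not> (m + \<epsilon> k < mhat k \<omega>)" "\<not> (mhat k \<omega> < m - \<epsilon> k)"
          by (auto simp: A_def)
        then have "\<bar>mhat k \<omega> - m\<bar> \<le> \<epsilon> k" by linarith
        also have "\<epsilon> k \<le> \<epsilon> n" using eps_anti[of n k] nk N0(1) by simp
        finally show "\<bar>mhat k \<omega> - m\<bar> \<le> K * sqrt (ln (real n)) / sqrt (real n)" by (simp add: \<epsilon>_def)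
      qed
    qed
  qed
qed

end
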